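(* Let $m,n\ge2$ be integers and let $H$ be the graph on the vertex set $\{x_{i,j}: i\in[m], j\in[n]\}$ with edge set $\{\{x_{i,j},x_{i',j+1}\}: 1\le i<i'\le m,\ 1\le j\le n-1\}$. Then \[\operatorname{match}(H)=(m-1)\left\lfloor\tfrac n2\right\rfloor+\left\lfloor\tfrac{n-1}2\right\rfloor.\]
   Context: $\operatorname{match}(H)$ is the maximum size of a matching (set of pairwise disjoint edges) in $H$. *)

theory Defs
  imports Main
begin

definition is_matching :: "'a set set \<Rightarrow> 'a set set \<Rightarrow> bool" where
  "is_matching E M \<longleftrightarrow> M \<subseteq> E \<and> (\<forall>e\<in>M. \<forall>f\<in>M. e \<noteq> f \<longrightarrow> e \<inter> f = {})"

(* match(H): maximum size of a matching in H (E assumed finite) *)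
definition match_num :: "'a set set \<Rightarrow> nat" where
  "match_num E = Max {card M | M. is_matching E M}"

(* The graph H of Lemma 4.1: vertices x_{i,j} = (i,j), i in [m], j in [n] *)
definition H_vertices :: "nat \<Rightarrow> nat \<Rightarrow> (nat \<times> nat) set" where
  "H_vertices m n = {1..m} \<times> {1..n}"

definition H_edges :: "nat \<Rightarrow> nat \<Rightarrow> (nat \<times> nat) set set" where
  "H_edges m n = {{(i, j), (i', j + 1)} | i i' j.
      1 \<le> i \<and> i < i' \<and> i' \<le> m \<and> 1 \<le> j \<and> j \<le> n - 1}"

end

theory Submission
  imports Defs
begin


lemma card_odd: "card {c::nat. 1 \<le> c \<and> c \<le> n \<and> odd c} = (n+1) div 2"
proof (induction n)
  case 0 then show ?case by simp
next
  case (Suc n)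
  have e: "{c::nat. 1 \<le> c \<and> c \<le> Suc n \<and> odd c} = {c. 1 \<le> c \<and> c \<le> n \<and> odd c} \<union> (if odd (Suc n) then {Suc n} else {})"
    by (auto simp: le_Suc_eq)
  show ?case unfolding e using Suc by (auto simp: card_insert_if)
qed

lemma card_even: "card {c::nat. 1 \<le> c \<and> c \<le> n \<and> even c} = n div 2"
proof (induction n)
  case 0 then show ?case by simp
next
  case (Suc n)
  have e: "{c::nat. 1 \<le> c \<and> c \<le> Suc n \<and> even c} = {c. 1 \<le> c \<and> c \<le> n \<and> even c} \<union> (if even (Suc n) then {Suc n} else {})"
    by (auto simp: le_Suc_eq)
  show ?case unfolding e using Suc by (auto simp: card_insert_if)
qed

definition oddv :: "(nat \<times> nat) set \<Rightarrow> nat \<times> nat" where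
  "oddv e = (THE v. v \<in> e \<and> odd (snd v))"
definition evenv :: "(nat \<times> nat) set \<Rightarrow> nat \<times> nat" where
  "evenv e = (THE v. v \<in> e \<and> even (snd v))"

lemma oddv_eq: "oddv {(i,j),(i',Suc j)} = (if odd j then (i,j) else (i',Suc j))"
  unfolding oddv_def by (rule the_equality) auto

lemma evenv_eq: "evenv {(i,j),(i',Suc j)} = (if even j then (i,j) else (i',Suc j))"
  unfolding evenv_def by (rule the_equality) auto

lemma edgeE:
  assumes "e \<in> H_edges m n"
  obtains i i' j where "e = {(i,j),(i',j+1)}" "1 \<le> i" "i < i'" "i' \<le> m" "1 \<le> j" "j \<le> n - 1"
  using assms unfolding H_edges_def by blast

lemma oddv_in: "e \<in> H_edges m n \<Longrightarrow> oddv e \<in> e"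
  by (erule edgeE) (simp add: oddv_eq)
lemma evenv_in: "e \<in> H_edges m n \<Longrightarrow> evenv e \<in> e"
  by (erule edgeE) (simp add: evenv_eq)

lemma upper:
  assumes "is_matching (H_edges m n) M" "m \<ge> 2" "n \<ge> 2"
  shows "card M \<le> (m - 1) * (n div 2) + (n - 1) div 2"
proof -
  have sub: "M \<subseteq> H_edges m n" and dis: "\<And>e f. e \<in> M \<Longrightarrow> f \<in> M \<Longrightarrow> e \<noteq> f \<Longrightarrow> e \<inter> f = {}"
    using assms(1) unfolding is_matching_def by auto
  show ?thesis
  proof (cases "even n")
    case True
    then obtain k where k: "n = 2 * k" by blast
    have k1: "k \<ge> 1" using k assms by simp
    let ?S = "({1..m} \<times> {c. 1 \<le> c \<and> c \<le> n \<and> odd c}) - {(m,1)}"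
    have inj: "inj_on oddv M"
    proof (rule inj_onI)
      fix e f assume ef: "e \<in> M" "f \<in> M" "oddv e = oddv f"
      have "oddv e \<in> e" if "e \<in> M" for e
        using sub that oddv_in by blast
      with ef have "e \<inter> f \<noteq> {}" by (metis disjoint_iff)
      with dis ef show "e = f" by blast
    qed
    have img: "oddv ` M \<subseteq> ?S"
    proof
      fix v assume "v \<in> oddv ` M"
      then obtain e where "e \<in> M" "v = oddv e" by auto
      then have "e \<in> H_edges m n" using sub by auto
      then obtain i i' j where "e = {(i,j),(i',j+1)}" "1 \<le> i" "i < i'" "i' \<le> m" "1 \<le> j" "j \<le> n - 1"
        by (rule edgeE)
      then show "v \<in> ?S" using \<open>v = oddv e\<close> by (auto simp: oddv_eq)
    qed
    have co: "card {c. 1 \<le> c \<and> c \<le> n \<and> odd c} = k"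
      using card_odd[of n] k by simp
    have cS: "card ?S = m * k - 1"
      using assms k1 co by (simp add: card_cartesian_product)
    have "card M \<le> card ?S"
      by (rule card_inj_on_le[OF inj img]) simp
    then have "card M \<le> m * k - 1" unfolding cS .
    moreover have "(m - 1) * (n div 2) + (n - 1) div 2 = m * k - 1"
      using k k1 assms by (simp add: diff_mult_distrib)
    ultimately show ?thesis by simp
  next
    case False
    then obtain k where k: "n = 2 * k + 1" using oddE by blast
    let ?S = "{1..m} \<times> {c. 1 \<le> c \<and> c \<le> n \<and> even c}"
    have inj: "inj_on evenv M"
    proof (rule inj_onI)
      fix e f assume ef: "e \<in> M" "f \<in> M" "evenv e = evenv f"
      have "evenv e \<in> e" if "e \<in> M" for e
        using sub that evenv_in by blast
      with ef have "e \<inter> f \<noteq> {}" by (metis disjoint_iff)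
      with dis ef show "e = f" by blast
    qed
    have img: "evenv ` M \<subseteq> ?S"
    proof
      fix v assume "v \<in> evenv ` M"
      then obtain e where "e \<in> M" "v = evenv e" by auto
      then have "e \<in> H_edges m n" using sub by auto
      then obtain i i' j where "e = {(i,j),(i',j+1)}" "1 \<le> i" "i < i'" "i' \<le> m" "1 \<le> j" "j \<le> n - 1"
        by (rule edgeE)
      then show "v \<in> ?S" using \<open>v = evenv e\<close> by (auto simp: evenv_eq)
    qed
    have ce: "card {c. 1 \<le> c \<and> c \<le> n \<and> even c} = k"
      using card_even[of n] k by simp
    have cS: "card ?S = m * k"
      using ce by (simp add: card_cartesian_product)
    have "card M \<le> card ?S"
      by (rule card_inj_on_le[OF inj img]) simp
    then have "card M \<le> m * k" unfolding cS .
    moreover have "(m - 1) * (n div 2) + (n - 1) div 2 = m * k"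
      using k assms by (simp add: diff_mult_distrib)
    ultimately show ?thesis by simp
  qed
qed


definition EA :: "nat \<Rightarrow> nat \<Rightarrow> (nat \<times> nat) set set" where
  "EA m n = (\<lambda>(i,t). {(i,2*t+1),(i+1,2*t+2)}) ` ({1..m-1} \<times> {..<n div 2})"
definition EB :: "nat \<Rightarrow> nat \<Rightarrow> (nat \<times> nat) set set" where
  "EB m n = (\<lambda>t. {(1,2*t+2),(m,2*t+3)}) ` {..<(n-1) div 2}"

lemma EA_card: "card (EA m n) = (m-1) * (n div 2)"
proof -
  have "inj_on (\<lambda>(i,t). {(i,2*t+1),(i+1,2*t+2)}) ({1..m-1} \<times> {..<n div 2})"
  proof (rule inj_onI)
    fix x y assume "x \<in> {1..m-1} \<times> {..<n div 2}" "y \<in> {1..m-1} \<times> {..<n div 2}"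
      and h: "(\<lambda>(i,t). {(i,2*t+1),(i+1,2*t+2)}) x = (\<lambda>(i,t). {(i,2*t+1),(i+1,2*t+2)}) y"
    obtain i t where x: "x = (i,t)" by force
    obtain i2 t2 where y: "y = (i2,t2)" by force
    have "{(i,2*t+1),(i+1,2*t+2)} = {(i2,2*t2+1),(i2+1,2*t2+2)}" using h x y by simp
    then have "(i,2*t+1) \<in> {(i2,2*t2+1),(i2+1,2*t2+2)}" by blast
    then have "(i = i2 \<and> 2*t+1 = 2*t2+1) \<or> 2*t+1 = 2*t2+2" by blast
    then have "i = i2 \<and> t = t2" by presburger
    then show "x = y" using x y by simp
  qed
  then show ?thesis unfolding EA_def by (simp add: card_image card_cartesian_product)
qed

lemma EB_card: "card (EB m n) = (n - 1) div 2"
proof -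
  have "inj_on (\<lambda>t. {(1::nat,2*t+2),(m,2*t+3)}) {..<(n-1) div 2}"
  proof (rule inj_onI)
    fix t t2 :: nat
    assume "{(1::nat,2*t+2),(m,2*t+3)} = {(1,2*t2+2),(m,2*t2+3)}"
    then have "(1::nat,2*t+2) \<in> {(1,2*t2+2),(m,2*t2+3)}" by blast
    then have "2*t+2 = 2*t2+2 \<or> 2*t+2 = 2*t2+3" by blast
    then show "t = t2" by presburger
  qed
  then show ?thesis unfolding EB_def by (simp add: card_image)
qed
lemma par_simps[simp]: "((2::nat)*t = Suc (2*s)) = False" "(Suc (2*t) = (2::nat)*s) = False"
  by presburger+


lemma EA_mem: "e \<in> EA m n \<Longrightarrow> \<exists>i t. e = {(i,2*t+1),(i+1,2*t+2)} \<and> 1 \<le> i \<and> i \<le> m - 1 \<and> t < n div 2"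
proof -
  assume "e \<in> EA m n"
  then obtain x where x: "x \<in> {1..m-1} \<times> {..<n div 2}" "e = (\<lambda>(i,t). {(i,2*t+1),(i+1,2*t+2)}) x"
    unfolding EA_def by blast
  obtain i t where "x = (i,t)" by force
  with x show ?thesis by (intro exI[of _ i] exI[of _ t]) auto
qed
lemma EB_mem: "e \<in> EB m n \<Longrightarrow> \<exists>t. e = {(1,2*t+2),(m,2*t+3)} \<and> t < (n - 1) div 2"
  unfolding EB_def by auto

lemma disj2: "a \<noteq> c \<Longrightarrow> a \<noteq> d \<Longrightarrow> b \<noteq> c \<Longrightarrow> b \<noteq> d \<Longrightarrow> {a,b} \<inter> {c,d} = {}"
  by auto

lemma disj_all:
  assumes e: "e \<in> EA m n \<union> EB m n" and f: "f \<in> EA m n \<union> EB m n" and ne: "e \<noteq> f"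
  shows "e \<inter> f = {}"
proof -
  have AA: "{(i,2*t+1),(i+1,2*t+2)} \<inter> {(i2,2*t2+1),(i2+1,2*t2+2)} = {}"
    if "{(i,2*t+1),(i+1,2*t+2)} \<noteq> {(i2,2*t2+1),(i2+1,2*t2+2)}" for i t i2 t2 :: nat
  proof -
    have "\<not> (i = i2 \<and> t = t2)" using that by auto
    then show ?thesis by (intro disj2) auto
  qed
  have AB: "{(i,2*t+1),(i+1,2*t+2)} \<inter> {(1,2*s+2),(m,2*s+3)} = {}"
    if "i \<le> m - 1" "1 \<le> i" for i t s :: nat
    using that by (intro disj2) auto
  have BB: "{(1::nat,2*t+2),(m,2*t+3)} \<inter> {(1,2*s+2),(m,2*s+3)} = {}"
    if "{(1::nat,2*t+2),(m,2*t+3)} \<noteq> {(1,2*s+2),(m,2*s+3)}" for t s :: nat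
  proof -
    have "t \<noteq> s" using that by auto
    then show ?thesis by (intro disj2) auto
  qed
  show ?thesis
  proof (cases "e \<in> EA m n")
    case eA: True
    from EA_mem[OF eA] obtain i t where ei: "e = {(i,2*t+1),(i+1,2*t+2)}" "1 \<le> i" "i \<le> m - 1" by blast
    show ?thesis
    proof (cases "f \<in> EA m n")
      case True
      from EA_mem[OF True] obtain i2 t2 where f2: "f = {(i2,2*t2+1),(i2+1,2*t2+2)}" by blast
      show ?thesis unfolding ei(1) f2 by (rule AA) (use ne ei(1) f2 in simp)
    next
      case False
      then have "f \<in> EB m n" using f by blast
      from EB_mem[OF this] obtain s where f2: "f = {(1,2*s+2),(m,2*s+3)}" by blast
      show ?thesis unfolding ei(1) f2 by (rule AB) (use ei in auto)
    qed
  next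
    case False
    then have "e \<in> EB m n" using e by blast
    from EB_mem[OF this] obtain t where et: "e = {(1,2*t+2),(m,2*t+3)}" by blast
    show ?thesis
    proof (cases "f \<in> EA m n")
      case True
      from EA_mem[OF True] obtain i t2 where f2: "f = {(i,2*t2+1),(i+1,2*t2+2)}" "1 \<le> i" "i \<le> m - 1" by blast
      have "f \<inter> e = {}" unfolding et f2(1) by (rule AB) (use f2 in auto)
      then show ?thesis by blast
    next
      case False
      then have "f \<in> EB m n" using f by blast
      from EB_mem[OF this] obtain s where f2: "f = {(1,2*s+2),(m,2*s+3)}" by blast
      show ?thesis unfolding et f2 by (rule BB) (use ne et f2 in simp)
    qed
  qed
qed

lemma EAB_disj: "EA m n \<inter> EB m n = {}"
proof (rule ccontr)
  assume "EA m n \<inter> EB m n \<noteq> {}"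
  then obtain e where eA: "e \<in> EA m n" and eB: "e \<in> EB m n" by blast
  from EA_mem[OF eA] obtain i t where e1: "e = {(i,2*t+1),(i+1,2*t+2)}" "1 \<le> i" by blast
  from EB_mem[OF eB] obtain s where e2: "e = {(1,2*s+2),(m,2*s+3)}" by blast
  have "(1::nat, 2*s+2) \<in> e" using e2 by simp
  then have "(1::nat, 2*s+2) = (i,2*t+1) \<or> (1::nat, 2*s+2) = (i+1,2*t+2)" using e1(1) by blast
  then have "2*s+2 = 2*t+1 \<or> i + 1 = 1" by auto
  then show False using e1(2) by presburger
qed


lemma H_edgesI: "1 \<le> i \<Longrightarrow> i < i' \<Longrightarrow> i' \<le> m \<Longrightarrow> 1 \<le> j \<Longrightarrow> j \<le> n - 1 \<Longrightarrow> {(i,j),(i',j+1)} \<in> H_edges m n"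
  unfolding H_edges_def by blast

lemma lower_match:
  assumes "m \<ge> 2" "n \<ge> 2"
  shows "is_matching (H_edges m n) (EA m n \<union> EB m n)"
  unfolding is_matching_def
proof (intro conjI ballI impI)
  show "EA m n \<union> EB m n \<subseteq> H_edges m n"
  proof
    fix e assume "e \<in> EA m n \<union> EB m n"
    then show "e \<in> H_edges m n"
    proof
      assume "e \<in> EA m n"
      from EA_mem[OF this] obtain i t where it: "e = {(i,2*t+1),(i+1,2*t+2)}" "1 \<le> i" "i \<le> m-1" "t < n div 2"
        by blast
      then have "2*t+1 \<le> n - 1" by linarith
      have "{(i,2*t+1),(i+1,2*t+1+1)} \<in> H_edges m n"
        by (rule H_edgesI) (use it \<open>2*t+1 \<le> n - 1\<close> in auto)
      then show ?thesis using it(1) by (simp add: numeral_eq_Suc)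
    next
      assume "e \<in> EB m n"
      from EB_mem[OF this] obtain t where it: "e = {(1,2*t+2),(m,2*t+3)}" "t < (n-1) div 2"
        by blast
      then have "2*t+2 \<le> n - 1" by linarith
      have "{(1,2*t+2),(m,2*t+2+1)} \<in> H_edges m n"
        by (rule H_edgesI) (use it \<open>2*t+2 \<le> n - 1\<close> assms in auto)
      then show ?thesis using it(1) by (simp add: numeral_eq_Suc)
    qed
  qed
next
  fix e f assume "e \<in> EA m n \<union> EB m n" "f \<in> EA m n \<union> EB m n" "e \<noteq> f"
  then show "e \<inter> f = {}" by (rule disj_all)
qed

lemma lower:
  shows "card (EA m n \<union> EB m n) = (m - 1) * (n div 2) + (n - 1) div 2"
proof -
  have "finite (EA m n)" "finite (EB m n)" unfolding EA_def EB_def by auto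
  then show ?thesis using EAB_disj[of m n] EA_card[of m n] EB_card[of m n] by (simp add: card_Un_disjoint)
qed

theorem lemma4p1:
  fixes m n :: nat
  assumes "m \<ge> 2" and "n \<ge> 2"
  shows "match_num (H_edges m n) = (m - 1) * (n div 2) + (n - 1) div 2"
  unfolding match_num_def
proof (rule Max_eqI)
  show "finite {card M |M. is_matching (H_edges m n) M}"
    by (rule finite_subset[of _ "{..(m - 1) * (n div 2) + (n - 1) div 2}"])
       (use upper assms in auto)
  show "\<And>y. y \<in> {card M |M. is_matching (H_edges m n) M} \<Longrightarrow> y \<le> (m - 1) * (n div 2) + (n - 1) div 2"
    using upper assms by auto
  show "(m - 1) * (n div 2) + (n - 1) div 2 \<in> {card M |M. is_matching (H_edges m n) M}"
    using lower[of m n] lower_match[OF assms] by (metis (mono_tags, lifting) mem_Collect_eq)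
qed
end
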